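(* Let $(\mathfrak{A},\mathfrak{A}_0)$ be a CQ*-algebra as in the context, let $H\in\mathfrak{A}_0$ and set $\alpha_t^H(X)=e^{itH}Xe^{-itH}$. Then for every $X\in\mathfrak{A}$: $\lim_{t\to0}\|e^{itH}X-X\|=0$, $\lim_{t\to0}\|Xe^{itH}-X\|=0$, $\lim_{t\to0}\left\|\frac{e^{itH}-I}{t}X-iHX\right\|=0$, $\lim_{t\to0}\left\|X\frac{e^{itH}-I}{t}-iXH\right\|=0$, $\lim_{t\to0}\|\alpha_t^H(X)-X\|=0$, and $\lim_{t\to0}\left\|\frac{\alpha_t^H(X)-X}{t}-i[H,X]\right\|=0$, where $[H,X]=HX-XH$.
   Context: Let $\mathfrak{A}_0$ be a unital C*-algebra with C*-norm $\|\cdot\|_0$ and unit $I$, and $\|\cdot\|$ another norm on $\mathfrak{A}_0$ with $\|A\|\le\|A\|_0$, $\|AB\|\le\|A\|\,\|B\|_0$, $\|A^*\|=\|A\|$. $\mathfrak{A}$ is the $\|\cdot\|$-completion of $\mathfrak{A}_0$ (norm still $\|\cdot\|$), and for $X\in\mathfrak{A}$, $A\in\mathfrak{A}_0$ and $A_n\in\mathfrak{A}_0$ with $\|A_n-X\|\to0$, $XA:=\lim A_nA$, $AX:=\lim AA_n$; these satisfy $\|XA\|\le\|X\|\|A\|_0$, $\|AX\|\le\|A\|_0\|X\|$. $e^{itH}\in\mathfrak{A}_0$ is defined by the functional calculus of $\mathfrak{A}_0$. *)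

theory Defs
  imports "HOL-Analysis.Analysis"
begin

definition complex_scaling :: "(complex \<Rightarrow> 'a::real_algebra_1 \<Rightarrow> 'a) \<Rightarrow> bool" where
  "complex_scaling sc \<longleftrightarrow>
     (\<forall>a x y. sc a (x + y) = sc a x + sc a y) \<and>
     (\<forall>a b x. sc (a + b) x = sc a x + sc b x) \<and>
     (\<forall>a b x. sc a (sc b x) = sc (a * b) x) \<and>
     (\<forall>x. sc 1 x = x) \<and>
     (\<forall>r x. sc (complex_of_real r) x = scaleR r x) \<and>
     (\<forall>a x y. sc a (x * y) = sc a x * y \<and> sc a (x * y) = x * sc a y)"

text \<open>Unital C*-algebra: the type is a unital Banach algebra (norm = C*-norm,
  unit = 1), with complex scalars sc and involution star.\<close>
definition unital_cstar_algebra ::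
  "(complex \<Rightarrow> 'a::{real_normed_algebra_1,banach} \<Rightarrow> 'a) \<Rightarrow> ('a \<Rightarrow> 'a) \<Rightarrow> bool" where
  "unital_cstar_algebra sc star \<longleftrightarrow>
     complex_scaling sc \<and>
     (\<forall>a x. norm (sc a x) = cmod a * norm x) \<and>
     (\<forall>x. star (star x) = x) \<and>
     (\<forall>x y. star (x + y) = star x + star y) \<and>
     (\<forall>a x. star (sc a x) = sc (cnj a) (star x)) \<and>
     (\<forall>x y. star (x * y) = star y * star x) \<and>
     (\<forall>x. norm (star x * x) = (norm x)\<^sup>2)"

definition cq_norm ::
  "(complex \<Rightarrow> 'a::{real_normed_algebra_1,banach} \<Rightarrow> 'a) \<Rightarrow> ('a \<Rightarrow> 'a) \<Rightarrow> ('a \<Rightarrow> real) \<Rightarrow> bool" where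
  "cq_norm sc star n \<longleftrightarrow>
     (\<forall>x. 0 \<le> n x) \<and>
     (\<forall>x. n x = 0 \<longrightarrow> x = 0) \<and>
     (\<forall>x y. n (x + y) \<le> n x + n y) \<and>
     (\<forall>a x. n (sc a x) = cmod a * n x) \<and>
     (\<forall>x. n x \<le> norm x) \<and>
     (\<forall>x y. n (x * y) \<le> n x * norm y) \<and>
     (\<forall>x. n (star x) = n x)"

text \<open>j embeds (A0, n) isometrically and densely into the Banach space 'b:
  'b is the n-completion of A0.\<close>
definition is_completion :: "('a::real_vector \<Rightarrow> real) \<Rightarrow> ('a \<Rightarrow> 'b::{real_normed_vector,banach}) \<Rightarrow> bool" where
  "is_completion n j \<longleftrightarrow> linear j \<and> (\<forall>x. norm (j x) = n x) \<and> closure (range j) = UNIV"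

definition approx_seq :: "('a \<Rightarrow> 'b::topological_space) \<Rightarrow> 'b \<Rightarrow> nat \<Rightarrow> 'a" where
  "approx_seq j X = (SOME s. (\<lambda>k. j (s k)) \<longlonglongrightarrow> X)"

definition Lmul :: "('a::times \<Rightarrow> 'b::t2_space) \<Rightarrow> 'a \<Rightarrow> 'b \<Rightarrow> 'b" where
  "Lmul j A X = lim (\<lambda>k. j (A * approx_seq j X k))"

definition Rmul :: "('a::times \<Rightarrow> 'b::t2_space) \<Rightarrow> 'b \<Rightarrow> 'a \<Rightarrow> 'b" where
  "Rmul j X A = lim (\<lambda>k. j (approx_seq j X k * A))"

definition expit :: "(complex \<Rightarrow> 'a::{real_normed_algebra_1,banach} \<Rightarrow> 'a) \<Rightarrow> 'a \<Rightarrow> real \<Rightarrow> 'a" where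
  "expit sc H t = exp (sc (\<i> * complex_of_real t) H)"

definition alphaH :: "(complex \<Rightarrow> 'a::{real_normed_algebra_1,banach} \<Rightarrow> 'a) \<Rightarrow> ('a \<Rightarrow> 'b::t2_space) \<Rightarrow> 'a \<Rightarrow> real \<Rightarrow> 'b \<Rightarrow> 'b" where
  "alphaH sc j H t X = Rmul j (Lmul j (expit sc H t) X) (expit sc H (- t))"

end

theory Submission imports Defs begin

lemma approx_seq_conv:
  assumes "is_completion n j"
  shows "(\<lambda>k. j (approx_seq j X k)) \<longlonglongrightarrow> X"
proof -
  have "X \<in> closure (range j)" using assms by (simp add: is_completion_def)
  then obtain x where x: "\<forall>k. x k \<in> range j" "x \<longlonglongrightarrow> X" by (auto simp: closure_sequential)
  then have "\<forall>k. \<exists>a. x k = j a" by blast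
  then obtain s where "\<forall>k. x k = j (s k)" by metis
  with x have "\<exists>s. (\<lambda>k. j (s k)) \<longlonglongrightarrow> X" by (metis (no_types, lifting) ext)
  then show ?thesis unfolding approx_seq_def by (rule someI_ex)
qed

lemma cauchy_transfer:
  fixes f :: "nat \<Rightarrow> 'b::real_normed_vector" and g :: "nat \<Rightarrow> 'c::real_normed_vector"
  assumes "Cauchy g" "\<And>k m. norm (f k - f m) \<le> c * norm (g k - g m)"
  shows "Cauchy f"
proof (rule metric_CauchyI)
  fix e :: real assume e: "e > 0"
  define c' where "c' = \<bar>c\<bar> + 1"
  have c': "c' > 0" by (simp add: c'_def)
  obtain M where M: "\<forall>m\<ge>M. \<forall>k\<ge>M. dist (g m) (g k) < e / c'"
    using metric_CauchyD[OF assms(1), of "e/c'"] e c' by auto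
  show "\<exists>M. \<forall>m\<ge>M. \<forall>k\<ge>M. dist (f m) (f k) < e"
  proof (intro exI allI impI)
    fix m k assume "m \<ge> M" "k \<ge> M"
    then have "norm (g m - g k) < e / c'" using M by (simp add: dist_norm)
    then have "c' * norm (g m - g k) < e" using c' by (simp add: field_simps)
    moreover have "norm (f m - f k) \<le> c' * norm (g m - g k)"
      using assms(2)[of m k] unfolding c'_def
      by (smt (verit) mult_right_mono norm_ge_zero)
    ultimately show "dist (f m) (f k) < e" by (simp add: dist_norm)
  qed
qed

lemma Lmul_conv:
  fixes j :: "'a::real_normed_algebra_1 \<Rightarrow> 'b::{real_normed_vector,banach}"
  assumes c: "is_completion n j" and nm: "\<And>x y. n (x * y) \<le> norm x * n y"
    and s: "(\<lambda>k. j (s k)) \<longlonglongrightarrow> X"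
  shows "(\<lambda>k. j (A * s k)) \<longlonglongrightarrow> Lmul j A X"
proof -
  have lin: "linear j" and nj: "\<And>x. norm (j x) = n x" using c by (auto simp: is_completion_def)
  have bd: "norm (j (A * u k) - j (A * v m)) \<le> norm A * norm (j (u k) - j (v m))" for u v k m
  proof -
    have "j (A * u k) - j (A * v m) = j (A * (u k - v m))"
      by (simp add: linear_diff[OF lin] right_diff_distrib)
    moreover have "norm (j (u k) - j (v m)) = n (u k - v m)" by (metis linear_diff[OF lin] nj)
    ultimately show ?thesis using nm[of A "u k - v m"] by (simp add: nj)
  qed
  define t where "t = approx_seq j X"
  have t: "(\<lambda>k. j (t k)) \<longlonglongrightarrow> X" unfolding t_def by (rule approx_seq_conv[OF c])
  have "Cauchy (\<lambda>k. j (A * t k))"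
    by (rule cauchy_transfer[OF LIMSEQ_imp_Cauchy[OF t]]) (rule bd)
  then have "convergent (\<lambda>k. j (A * t k))" by (simp add: Cauchy_convergent_iff)
  then have tl: "(\<lambda>k. j (A * t k)) \<longlonglongrightarrow> Lmul j A X"
    unfolding Lmul_def t_def[symmetric] by (simp add: convergent_LIMSEQ_iff)
  have "(\<lambda>k. j (s k) - j (t k)) \<longlonglongrightarrow> X - X" by (intro tendsto_diff s t)
  then have "(\<lambda>k. norm A * norm (j (s k) - j (t k))) \<longlonglongrightarrow> 0"
    by (simp add: tendsto_mult_right_zero tendsto_norm_zero)
  then have "(\<lambda>k. j (A * s k) - j (A * t k)) \<longlonglongrightarrow> 0"
    by (rule Lim_null_comparison[rotated]) (simp add: bd)
  from tendsto_add[OF this tl] show ?thesis by simp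
qed

lemma Rmul_conv:
  fixes j :: "'a::real_normed_algebra_1 \<Rightarrow> 'b::{real_normed_vector,banach}"
  assumes c: "is_completion n j" and nm: "\<And>x y. n (x * y) \<le> n x * norm y"
    and s: "(\<lambda>k. j (s k)) \<longlonglongrightarrow> X"
  shows "(\<lambda>k. j (s k * A)) \<longlonglongrightarrow> Rmul j X A"
proof -
  have lin: "linear j" and nj: "\<And>x. norm (j x) = n x" using c by (auto simp: is_completion_def)
  have bd: "norm (j (u k * A) - j (v m * A)) \<le> norm A * norm (j (u k) - j (v m))" for u v k m
  proof -
    have "j (u k * A) - j (v m * A) = j ((u k - v m) * A)"
      by (simp add: linear_diff[OF lin] left_diff_distrib)
    moreover have "norm (j (u k) - j (v m)) = n (u k - v m)" by (metis linear_diff[OF lin] nj)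
    ultimately show ?thesis using nm[of "u k - v m" A] by (simp add: nj mult.commute)
  qed
  define t where "t = approx_seq j X"
  have t: "(\<lambda>k. j (t k)) \<longlonglongrightarrow> X" unfolding t_def by (rule approx_seq_conv[OF c])
  have "Cauchy (\<lambda>k. j (t k * A))"
    by (rule cauchy_transfer[OF LIMSEQ_imp_Cauchy[OF t]]) (rule bd)
  then have "convergent (\<lambda>k. j (t k * A))" by (simp add: Cauchy_convergent_iff)
  then have tl: "(\<lambda>k. j (t k * A)) \<longlonglongrightarrow> Rmul j X A"
    unfolding Rmul_def t_def[symmetric] by (simp add: convergent_LIMSEQ_iff)
  have "(\<lambda>k. j (s k) - j (t k)) \<longlonglongrightarrow> X - X" by (intro tendsto_diff s t)
  then have "(\<lambda>k. norm A * norm (j (s k) - j (t k))) \<longlonglongrightarrow> 0"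
    by (simp add: tendsto_mult_right_zero tendsto_norm_zero)
  then have "(\<lambda>k. j (s k * A) - j (t k * A)) \<longlonglongrightarrow> 0"
    by (rule Lim_null_comparison[rotated]) (simp add: bd)
  from tendsto_add[OF this tl] show ?thesis by simp
qed

context
  fixes j :: "'a::real_normed_algebra_1 \<Rightarrow> 'b::{real_normed_vector,banach}" and n
  assumes c: "is_completion n j" and nmL: "\<And>x y. n (x * y) \<le> norm x * n y"
    and nmR: "\<And>x y. n (x * y) \<le> n x * norm y"
begin

lemma lin: "linear j" and nj: "norm (j x) = n x" using c by (auto simp: is_completion_def)

lemma Lc: "(\<lambda>k. j (A * approx_seq j X k)) \<longlonglongrightarrow> Lmul j A X"
  by (rule Lmul_conv[OF c nmL approx_seq_conv[OF c]])
lemma Rc: "(\<lambda>k. j (approx_seq j X k * A)) \<longlonglongrightarrow> Rmul j X A"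
  by (rule Rmul_conv[OF c nmR approx_seq_conv[OF c]])

lemma L_norm: "norm (Lmul j A X) \<le> norm A * norm X"
proof (rule tendsto_le[OF _ tendsto_mult_left[OF tendsto_norm[OF approx_seq_conv[OF c]]] tendsto_norm[OF Lc]])
  show "\<forall>\<^sub>F k in sequentially. norm (j (A * approx_seq j X k)) \<le> norm A * norm (j (approx_seq j X k))"
    using nmL by (simp add: nj)
qed simp

lemma R_norm: "norm (Rmul j X A) \<le> norm X * norm A"
proof (rule tendsto_le[OF _ tendsto_mult_right[OF tendsto_norm[OF approx_seq_conv[OF c]]] tendsto_norm[OF Rc]])
  show "\<forall>\<^sub>F k in sequentially. norm (j (approx_seq j X k * A)) \<le> norm (j (approx_seq j X k)) * norm A"
    using nmR by (simp add: nj)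
qed simp

lemma L_diff: "Lmul j (A - B) X = Lmul j A X - Lmul j B X"
proof (rule tendsto_unique[OF _ Lc])
  show "(\<lambda>k. j ((A - B) * approx_seq j X k)) \<longlonglongrightarrow> Lmul j A X - Lmul j B X"
    using tendsto_diff[OF Lc[of A X] Lc[of B X]] by (simp add: left_diff_distrib linear_diff[OF lin])
qed simp

lemma R_diff: "Rmul j X (A - B) = Rmul j X A - Rmul j X B"
proof (rule tendsto_unique[OF _ Rc])
  show "(\<lambda>k. j (approx_seq j X k * (A - B))) \<longlonglongrightarrow> Rmul j X A - Rmul j X B"
    using tendsto_diff[OF Rc[of X A] Rc[of X B]] by (simp add: right_diff_distrib linear_diff[OF lin])
qed simp

lemma L_scale: "Lmul j (r *\<^sub>R A) X = r *\<^sub>R Lmul j A X"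
proof (rule tendsto_unique[OF _ Lc])
  show "(\<lambda>k. j ((r *\<^sub>R A) * approx_seq j X k)) \<longlonglongrightarrow> r *\<^sub>R Lmul j A X"
    using tendsto_scaleR[OF tendsto_const Lc[of A X], of r] by (simp add: linear_scale[OF lin])
qed simp

lemma R_scale: "Rmul j X (r *\<^sub>R A) = r *\<^sub>R Rmul j X A"
proof (rule tendsto_unique[OF _ Rc])
  show "(\<lambda>k. j (approx_seq j X k * (r *\<^sub>R A))) \<longlonglongrightarrow> r *\<^sub>R Rmul j X A"
    using tendsto_scaleR[OF tendsto_const Rc[of X A], of r] by (simp add: linear_scale[OF lin])
qed simp

lemma L_one: "Lmul j 1 X = X"
  using Lc[of 1 X] approx_seq_conv[OF c, of X] by (simp add: LIMSEQ_unique)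

lemma R_one: "Rmul j X 1 = X"
  using Rc[of X 1] approx_seq_conv[OF c, of X] by (simp add: LIMSEQ_unique)

lemma R_diff1: "Rmul j (Y - Z) A = Rmul j Y A - Rmul j Z A"
proof -
  have "(\<lambda>k. j (approx_seq j Y k - approx_seq j Z k)) \<longlonglongrightarrow> Y - Z"
    using tendsto_diff[OF approx_seq_conv[OF c] approx_seq_conv[OF c]] by (simp add: linear_diff[OF lin])
  from Rmul_conv[OF c nmR this, of A] have "(\<lambda>k. j (approx_seq j Y k * A) - j (approx_seq j Z k * A)) \<longlonglongrightarrow> Rmul j (Y - Z) A"
    by (simp add: left_diff_distrib linear_diff[OF lin])
  from tendsto_unique[OF _ this tendsto_diff[OF Rc Rc]] show ?thesis by simp
qed

lemma R_scale1: "Rmul j (r *\<^sub>R Y) A = r *\<^sub>R Rmul j Y A"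
proof -
  have "(\<lambda>k. j (r *\<^sub>R approx_seq j Y k)) \<longlonglongrightarrow> r *\<^sub>R Y"
    using tendsto_scaleR[OF tendsto_const approx_seq_conv[OF c]] by (simp add: linear_scale[OF lin])
  from Rmul_conv[OF c nmR this, of A] have "(\<lambda>k. r *\<^sub>R j (approx_seq j Y k * A)) \<longlonglongrightarrow> Rmul j (r *\<^sub>R Y) A"
    by (simp add: linear_scale[OF lin])
  from tendsto_unique[OF _ this tendsto_scaleR[OF tendsto_const Rc]] show ?thesis by simp
qed

end


lemma neg_at0:
  fixes f :: "real \<Rightarrow> 'b::topological_space"
  assumes "(f \<longlongrightarrow> l) (at 0)" shows "((\<lambda>t. f (- t)) \<longlongrightarrow> l) (at 0)"
proof -
  have "filtermap uminus (at (0::real)) = at 0" using filtermap_at_minus[of "0::real"] by simp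
  then have "((f \<circ> uminus) \<longlongrightarrow> l) (at (0::real))" using assms by (simp add: tendsto_compose_filtermap)
  then show ?thesis by (simp add: comp_def)
qed

lemma exp_cont0:
  fixes K :: "'a::{real_normed_algebra_1,banach}"
  shows "((\<lambda>t::real. norm (exp (t *\<^sub>R K) - 1)) \<longlongrightarrow> 0) (at 0)"
proof -
  have "continuous (at (0::real)) (\<lambda>t. exp (t *\<^sub>R K))"
    by (rule has_vector_derivative_continuous[OF exp_scaleR_has_vector_derivative_right])
  then have "((\<lambda>t::real. exp (t *\<^sub>R K)) \<longlongrightarrow> 1) (at 0)" by (simp add: continuous_at)
  then have "((\<lambda>t::real. exp (t *\<^sub>R K) - 1) \<longlongrightarrow> 0) (at 0)"
    using tendsto_diff[of _ 1 _ "\<lambda>_. 1" 1] by fastforce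
  then show ?thesis by (simp add: tendsto_norm_zero)
qed

lemma exp_deriv0:
  fixes K :: "'a::{real_normed_algebra_1,banach}"
  shows "((\<lambda>t::real. norm ((1 / t) *\<^sub>R (exp (t *\<^sub>R K) - 1) - K)) \<longlongrightarrow> 0) (at 0)"
proof -
  have "((\<lambda>t. exp (t *\<^sub>R K)) has_derivative (\<lambda>x. x *\<^sub>R K)) (at (0::real))"
    using exp_scaleR_has_vector_derivative_right[of K 0 UNIV] by (simp add: has_vector_derivative_def)
  then have "((\<lambda>y. (exp (y *\<^sub>R K) - 1 - y *\<^sub>R K) /\<^sub>R norm y) \<longlongrightarrow> 0) (at (0::real))"
    by (simp add: has_derivative_at_within)
  then have h: "((\<lambda>y. norm ((exp (y *\<^sub>R K) - 1 - y *\<^sub>R K) /\<^sub>R norm y)) \<longlongrightarrow> 0) (at (0::real))"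
    by (rule tendsto_norm_zero)
  show ?thesis
  proof (rule Lim_transform_eventually[OF h])
    show "\<forall>\<^sub>F y in at 0. norm ((exp (y *\<^sub>R K) - 1 - y *\<^sub>R K) /\<^sub>R norm y) = norm ((1 / y) *\<^sub>R (exp (y *\<^sub>R K) - 1) - K)"
      unfolding eventually_at_filter
    proof (intro always_eventually allI impI)
      fix y :: real assume "y \<noteq> 0"
      then have "(1 / y) *\<^sub>R (exp (y *\<^sub>R K) - 1) - K = (1/y) *\<^sub>R (exp (y *\<^sub>R K) - 1 - y *\<^sub>R K)"
        by (simp add: scaleR_diff_right)
      then show "norm ((exp (y *\<^sub>R K) - 1 - y *\<^sub>R K) /\<^sub>R norm y) = norm ((1 / y) *\<^sub>R (exp (y *\<^sub>R K) - 1) - K)"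
        by (simp add: divide_inverse mult.commute)
    qed
  qed
qed


theorem lemma5p2:
  fixes sc :: "complex \<Rightarrow> 'a::{real_normed_algebra_1,banach} \<Rightarrow> 'a"
    and star :: "'a \<Rightarrow> 'a"
    and n :: "'a \<Rightarrow> real"
    and j :: "'a \<Rightarrow> 'b::{real_normed_vector,banach}"
    and H :: 'a and X :: 'b
  assumes "unital_cstar_algebra sc star"
    and "cq_norm sc star n"
    and "is_completion n j"
  shows "((\<lambda>t. norm (Lmul j (expit sc H t) X - X)) \<longlongrightarrow> 0) (at (0::real)) \<and>
     ((\<lambda>t. norm (Rmul j X (expit sc H t) - X)) \<longlongrightarrow> 0) (at (0::real)) \<and>
     ((\<lambda>t. norm (Lmul j (scaleR (1 / t) (expit sc H t - 1)) X
                    - Lmul j (sc \<i> H) X)) \<longlongrightarrow> 0) (at (0::real)) \<and>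
     ((\<lambda>t. norm (Rmul j X (scaleR (1 / t) (expit sc H t - 1))
                    - Rmul j X (sc \<i> H))) \<longlongrightarrow> 0) (at (0::real)) \<and>
     ((\<lambda>t. norm (alphaH sc j H t X - X)) \<longlongrightarrow> 0) (at (0::real)) \<and>
     ((\<lambda>t. norm (scaleR (1 / t) (alphaH sc j H t X - X)
                    - (Lmul j (sc \<i> H) X - Rmul j X (sc \<i> H)))) \<longlongrightarrow> 0) (at (0::real))"
proof -
  note c = assms(3)
  have cs: "complex_scaling sc" and ss: "\<And>x. star (star x) = x"
    and sm: "\<And>x y. star (x * y) = star y * star x" and cst: "\<And>x. norm (star x * x) = (norm x)\<^sup>2"
    using assms(1) by (auto simp: unital_cstar_algebra_def)
  have nmR: "\<And>x y. n (x * y) \<le> n x * norm y" and nst: "\<And>x. n (star x) = n x"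
    using assms(2) by (auto simp: cq_norm_def)
  have sle: "norm x \<le> norm (star x)" for x
  proof (cases "norm x = 0")
    case False
    have "(norm x)\<^sup>2 \<le> norm (star x) * norm x" using cst[of x] norm_mult_ineq[of "star x" x] by simp
    then show ?thesis using False by (simp add: power2_eq_square)
  qed simp
  have nsx: "norm (star x) = norm x" for x using sle[of x] sle[of "star x"] ss[of x] by simp
  have nmL: "n (x * y) \<le> norm x * n y" for x y
  proof -
    have "n (x * y) = n (star y * star x)" by (metis nst sm)
    also have "\<dots> \<le> n (star y) * norm (star x)" by (rule nmR)
    finally show ?thesis by (simp add: nst nsx mult.commute)
  qed
  note Ln = L_norm[OF c nmL nmR] and Rn = R_norm[OF c nmL nmR]
    and Ld = L_diff[OF c nmL nmR] and Rd = R_diff[OF c nmL nmR]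
    and Ls = L_scale[OF c nmL nmR] and Rs = R_scale[OF c nmL nmR]
    and L1 = L_one[OF c nmL nmR] and R1 = R_one[OF c nmL nmR]
    and Rd1 = R_diff1[OF c nmL nmR] and Rs1 = R_scale1[OF c nmL nmR]
  define K where "K = sc \<i> H"
  have hE: "expit sc H t = exp (t *\<^sub>R K)" for t
  proof -
    have "sc (\<i> * complex_of_real t) H = sc (complex_of_real t) (sc \<i> H)"
      using cs unfolding complex_scaling_def by (metis mult.commute)
    also have "\<dots> = t *\<^sub>R K" using cs unfolding complex_scaling_def K_def by metis
    finally show ?thesis by (simp add: expit_def)
  qed
  define E where "E t = exp (t *\<^sub>R K)" for t :: real
  define D where "D t = (1 / t) *\<^sub>R (E t - 1)" for t :: real
  have E0: "((\<lambda>t. norm (E t - 1)) \<longlongrightarrow> 0) (at 0)" unfolding E_def by (rule exp_cont0)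
  have E0m: "((\<lambda>t. norm (E (- t) - 1)) \<longlongrightarrow> 0) (at 0)" by (rule neg_at0[OF E0])
  have D0: "((\<lambda>t. norm (D t - K)) \<longlongrightarrow> 0) (at 0)" unfolding D_def E_def by (rule exp_deriv0)
  have D0m: "((\<lambda>t. norm (D (- t) - K)) \<longlongrightarrow> 0) (at 0)" by (rule neg_at0[OF D0])
  have Em1: "((\<lambda>t. norm (E (- t))) \<longlongrightarrow> 1) (at 0)"
  proof -
    have "((\<lambda>t. E (- t) - 1) \<longlongrightarrow> 0) (at 0)" using E0m by (simp add: tendsto_norm_zero_iff)
    then have "((\<lambda>t. E (- t)) \<longlongrightarrow> 1) (at 0)" by (rule LIM_zero_cancel)
    from tendsto_norm[OF this] show ?thesis by simp
  qed
  have P1: "((\<lambda>t. norm (Lmul j (E t) X - X)) \<longlongrightarrow> 0) (at 0)"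
  proof (rule Lim_null_comparison)
    show "((\<lambda>t. norm (E t - 1) * norm X) \<longlongrightarrow> 0) (at 0)" by (rule tendsto_mult_left_zero[OF E0])
    show "\<forall>\<^sub>F t in at 0. norm (norm (Lmul j (E t) X - X)) \<le> norm (E t - 1) * norm X"
      using Ln[of "E _ - 1" X] by (simp add: Ld L1)
  qed
  have P2g: "((\<lambda>t. norm (Rmul j X (E (g t)) - X)) \<longlongrightarrow> 0) (at 0)"
    if g: "((\<lambda>t. norm (E (g t) - 1)) \<longlongrightarrow> 0) (at (0::real))" for g :: "real \<Rightarrow> real"
  proof (rule Lim_null_comparison)
    show "((\<lambda>t. norm X * norm (E (g t) - 1)) \<longlongrightarrow> 0) (at 0)" by (rule tendsto_mult_right_zero[OF g])
    show "\<forall>\<^sub>F t in at 0. norm (norm (Rmul j X (E (g t)) - X)) \<le> norm X * norm (E (g t) - 1)"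
      using Rn[of X "E _ - 1"] by (simp add: Rd R1)
  qed
  have P2: "((\<lambda>t. norm (Rmul j X (E t) - X)) \<longlongrightarrow> 0) (at 0)" using P2g[of "\<lambda>t. t"] E0 by simp
  have P2m: "((\<lambda>t. norm (Rmul j X (E (- t)) - X)) \<longlongrightarrow> 0) (at 0)" using P2g[of "\<lambda>t. - t"] E0m by simp
  have P3: "((\<lambda>t. norm (Lmul j (D t) X - Lmul j K X)) \<longlongrightarrow> 0) (at 0)"
  proof (rule Lim_null_comparison)
    show "((\<lambda>t. norm (D t - K) * norm X) \<longlongrightarrow> 0) (at 0)" by (rule tendsto_mult_left_zero[OF D0])
    show "\<forall>\<^sub>F t in at 0. norm (norm (Lmul j (D t) X - Lmul j K X)) \<le> norm (D t - K) * norm X"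
      using Ln[of "D _ - K" X] by (simp add: Ld)
  qed
  have P4: "((\<lambda>t. norm (Rmul j X (D t) - Rmul j X K)) \<longlongrightarrow> 0) (at 0)"
  proof (rule Lim_null_comparison)
    show "((\<lambda>t. norm X * norm (D t - K)) \<longlongrightarrow> 0) (at 0)" by (rule tendsto_mult_right_zero[OF D0])
    show "\<forall>\<^sub>F t in at 0. norm (norm (Rmul j X (D t) - Rmul j X K)) \<le> norm X * norm (D t - K)"
      using Rn[of X "D _ - K"] by (simp add: Rd)
  qed
  have P5: "((\<lambda>t. norm (Rmul j (Lmul j (E t) X) (E (- t)) - X)) \<longlongrightarrow> 0) (at 0)"
  proof (rule Lim_null_comparison)
    have "((\<lambda>t. norm (Lmul j (E t) X - X) * norm (E (- t)) + norm (Rmul j X (E (- t)) - X)) \<longlongrightarrow> 0 * 1 + 0) (at 0)"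
      by (intro tendsto_add tendsto_mult P1 Em1 P2m)
    then show "((\<lambda>t. norm (Lmul j (E t) X - X) * norm (E (- t)) + norm (Rmul j X (E (- t)) - X)) \<longlongrightarrow> 0) (at 0)"
      by simp
    show "\<forall>\<^sub>F t in at 0. norm (norm (Rmul j (Lmul j (E t) X) (E (- t)) - X))
        \<le> norm (Lmul j (E t) X - X) * norm (E (- t)) + norm (Rmul j X (E (- t)) - X)"
    proof (intro always_eventually allI)
      fix t
      have "Rmul j (Lmul j (E t) X) (E (- t)) - X = Rmul j (Lmul j (E t) X - X) (E (- t)) + (Rmul j X (E (- t)) - X)"
        by (simp add: Rd1)
      then have "norm (Rmul j (Lmul j (E t) X) (E (- t)) - X) \<le> norm (Rmul j (Lmul j (E t) X - X) (E (- t))) + norm (Rmul j X (E (- t)) - X)"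
        by (metis norm_triangle_ineq)
      then show "norm (norm (Rmul j (Lmul j (E t) X) (E (- t)) - X))
        \<le> norm (Lmul j (E t) X - X) * norm (E (- t)) + norm (Rmul j X (E (- t)) - X)"
        using Rn[of "Lmul j (E t) X - X" "E (- t)"] by simp
    qed
  qed
  have P6: "((\<lambda>t. norm ((1 / t) *\<^sub>R (Rmul j (Lmul j (E t) X) (E (- t)) - X) - (Lmul j K X - Rmul j X K))) \<longlongrightarrow> 0) (at 0)"
  proof (rule Lim_null_comparison)
    have "((\<lambda>t. norm (D t - K) * norm X * norm (E (- t)) + norm (Lmul j K X) * norm (E (- t) - 1) + norm X * norm (D (- t) - K))
       \<longlongrightarrow> 0 * norm X * 1 + norm (Lmul j K X) * 0 + norm X * 0) (at 0)"
      by (intro tendsto_add tendsto_mult D0 Em1 E0m D0m tendsto_const)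
    then show "((\<lambda>t. norm (D t - K) * norm X * norm (E (- t)) + norm (Lmul j K X) * norm (E (- t) - 1) + norm X * norm (D (- t) - K)) \<longlongrightarrow> 0) (at 0)"
      by simp
    show "\<forall>\<^sub>F t in at 0. norm (norm ((1 / t) *\<^sub>R (Rmul j (Lmul j (E t) X) (E (- t)) - X) - (Lmul j K X - Rmul j X K)))
        \<le> norm (D t - K) * norm X * norm (E (- t)) + norm (Lmul j K X) * norm (E (- t) - 1) + norm X * norm (D (- t) - K)"
    proof (intro always_eventually allI)
      fix t
      have eq: "(1 / t) *\<^sub>R (Rmul j (Lmul j (E t) X) (E (- t)) - X) - (Lmul j K X - Rmul j X K)
         = Rmul j (Lmul j (D t - K) X) (E (- t)) + Rmul j (Lmul j K X) (E (- t) - 1) - Rmul j X (D (- t) - K)"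
        unfolding D_def by (simp only: Ld Rd Rd1 Ls Rs Rs1 L1 R1) (simp add: scaleR_diff_right algebra_simps)
      have "norm (Rmul j (Lmul j (D t - K) X) (E (- t)) + Rmul j (Lmul j K X) (E (- t) - 1) - Rmul j X (D (- t) - K))
          \<le> norm (Rmul j (Lmul j (D t - K) X) (E (- t))) + norm (Rmul j (Lmul j K X) (E (- t) - 1)) + norm (Rmul j X (D (- t) - K))"
        using norm_triangle_ineq4[of "Rmul j (Lmul j (D t - K) X) (E (- t)) + Rmul j (Lmul j K X) (E (- t) - 1)" "Rmul j X (D (- t) - K)"]
          norm_triangle_ineq[of "Rmul j (Lmul j (D t - K) X) (E (- t))" "Rmul j (Lmul j K X) (E (- t) - 1)"]
        by linarith
      also have "\<dots> \<le> norm (D t - K) * norm X * norm (E (- t)) + norm (Lmul j K X) * norm (E (- t) - 1) + norm X * norm (D (- t) - K)"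
      proof (intro add_mono)
        show "norm (Rmul j (Lmul j (D t - K) X) (E (- t))) \<le> norm (D t - K) * norm X * norm (E (- t))"
          using Rn[of "Lmul j (D t - K) X" "E (- t)"] Ln[of "D t - K" X]
          by (meson mult_right_mono norm_ge_zero order_trans)
      qed (rule Rn)+
      finally show "norm (norm ((1 / t) *\<^sub>R (Rmul j (Lmul j (E t) X) (E (- t)) - X) - (Lmul j K X - Rmul j X K)))
        \<le> norm (D t - K) * norm X * norm (E (- t)) + norm (Lmul j K X) * norm (E (- t) - 1) + norm X * norm (D (- t) - K)"
        by (simp add: eq)
    qed
  qed
  show ?thesis
    unfolding alphaH_def hE K_def[symmetric] E_def[symmetric, abs_def] D_def[symmetric]
    using P1 P2 P3 P4 P5 P6 by simp
qed

end
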